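(* In the setting of the context, for $1\le i\le 2n$ let $A_1(i,c)$ be the area of the polygon with vertices $P_i,P_{i+1},\dots,P_{i+n}$ and $A_2(i,c)$ the area of the polygon with vertices $P_{i+n},P_{i+n+1},\dots,P_{i}$ (the two parts into which the diagonal $P_iP_{i+n}$ cuts $P$). Then $$A_1(i,c)-A_2(i,c)=4c\beta_i,\qquad 1\le i\le 2n.$$
   Context: $[x,y]$ denotes the determinant of the matrix with columns $x,y\in\mathbb{R}^2$. Fix $n\ge2$; indices (integer and half-integer) are read modulo $2n$. $U$ is a convex $2n$-gon with distinct vertices $U_1,\dots,U_{2n}$ in counterclockwise order with $U_{i+n}=-U_i$. Let $c>0$ and let $P$ be a convex polygon with nonempty interior and vertex list $P_1,\dots,P_{2n}$ (listed counterclockwise, consecutive entries may coincide) with $P_{i+1}-P_i$ a nonnegative multiple of $U_{i+1}-U_i$ and $P_i-P_{i+n}=2cU_i$ for all $i$. Let $M_i=\frac12(P_i+P_{i+n})$ (so $P_i=M_i+cU_i$), define $\alpha_{i+\frac12}$ by $M_{i+1}-M_i=\alpha_{i+\frac12}(U_{i+1}-U_i)$, and set $\beta_i=\frac12\sum_{j=i}^{i+n-1}\alpha_{j+\frac12}[U_j,U_{j+1}]$. *)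

theory Defs
  imports "HOL-Analysis.Analysis"
begin

text \<open>Points of the plane are pairs of reals. det2 x y is the determinant [x,y]
of the 2x2 matrix with columns x and y.\<close>
definition det2 :: "real \<times> real \<Rightarrow> real \<times> real \<Rightarrow> real" where
  "det2 x y = fst x * snd y - snd x * fst y"

end

theory Submission
  imports Defs
begin



definition phi :: "real^2 \<Rightarrow> real \<times> real" where "phi v = (v$1, v$2)"

lemma phi_cont: "continuous_on UNIV phi"
  unfolding phi_def by (intro continuous_intros)

lemma phi_meas[measurable]: "phi \<in> borel_measurable borel"
  using phi_cont by (simp add: borel_measurable_continuous_onI)

lemma prod_basis_vec2: "(\<Prod>b\<in>(Basis::(real^2) set). f b) = f (axis 1 1) * f (axis 2 1)"
proof -
  have "(Basis::(real^2) set) = (\<lambda>i. axis i 1) ` UNIV" by (auto simp: Basis_vec_def)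
  also have "UNIV = {1::2, 2}" using exhaust_2 by auto
  finally have B: "(Basis::(real^2) set) = {axis 1 1, axis 2 1}" by simp
  have ne: "axis (1::2) (1::real) \<noteq> axis 2 1" by (simp add: axis_eq_axis)
  show ?thesis unfolding B using ne by simp
qed

lemma distr_phi: "distr lborel borel phi = lborel"
proof (rule lborel_eqI[symmetric])
  fix l u :: "real \<times> real"
  assume le: "\<And>b. b \<in> Basis \<Longrightarrow> l \<bullet> b \<le> u \<bullet> b"
  have l1: "fst l \<le> fst u" using le[of "(1,0)"] by (cases l; cases u) (simp add: Basis_prod_def)
  have l2: "snd l \<le> snd u" using le[of "(0,1)"] by (cases l; cases u) (simp add: Basis_prod_def)
  have ip[simp]: "\<And>v::real\<times>real. v \<bullet> (1,0) = fst v" "\<And>v::real\<times>real. v \<bullet> (0,1) = snd v"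
    by (auto simp: inner_prod_def)
  define a :: "real^2" where "a = vector [fst l, snd l]"
  define b :: "real^2" where "b = vector [fst u, snd u]"
  have pre: "phi -` box l u = box a b"
    by (auto simp: phi_def a_def b_def mem_box_cart forall_2 mem_box Basis_prod_def)
  have ab: "\<forall>x\<in>Basis. a \<bullet> x \<le> b \<bullet> x"
  proof
    fix x :: "real^2" assume "x \<in> Basis"
    then obtain k where k: "x = axis k 1" by (auto simp: Basis_vec_def)
    show "a \<bullet> x \<le> b \<bullet> x" unfolding k inner_axis
      using l1 l2 exhaust_2[of k] by (auto simp: a_def b_def)
  qed
  have "emeasure (distr lborel borel phi) (box l u) = emeasure lborel (box a b)"
    by (simp add: emeasure_distr pre)
  also have "\<dots> = (\<Prod>b\<in>Basis. (u - l) \<bullet> b)"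
    using l1 l2 ab by (simp add: emeasure_lborel_box_eq prod_basis_vec2 a_def b_def Basis_prod_def cart_eq_inner_axis[symmetric] inner_axis)
  finally show "emeasure (distr lborel borel phi) (box l u) = (\<Prod>b\<in>Basis. (u - l) \<bullet> b)" .
qed simp

definition psi :: "real \<times> real \<Rightarrow> real^2" where "psi p = vector [fst p, snd p]"

lemma psi_linear: "linear psi"
  by (rule linearI) (auto simp: psi_def vec_eq_iff forall_2)

lemma phi_psi_vimage: "phi -` K = psi ` K"
proof -
  have 1: "\<And>v. psi (phi v) = v" by (simp add: psi_def phi_def vec_eq_iff forall_2)
  have 2: "\<And>p. phi (psi p) = p" by (simp add: psi_def phi_def)
  show ?thesis
  proof
    show "phi -` K \<subseteq> psi ` K" using 1 by (metis image_eqI subsetI vimageE)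
    show "psi ` K \<subseteq> phi -` K" using 2 by auto
  qed
qed

lemma measure_compact_transfer:
  assumes "compact (K::(real\<times>real) set)"
  shows "measure lebesgue K = measure lebesgue (psi ` K)"
proof -
  have Kb: "K \<in> sets borel" using assms by (simp add: borel_compact)
  have cpsi: "continuous_on UNIV psi"
    by (simp add: linear_continuous_on psi_linear linear_linear)
  have "compact (psi ` K)" using assms cpsi by (meson compact_continuous_image continuous_on_subset subset_UNIV)
  then have Pb: "psi ` K \<in> sets borel" by (simp add: borel_compact)
  have "measure lebesgue K = measure lborel K" using Kb by (simp add: measure_completion)
  also have "\<dots> = measure (distr lborel borel phi) K" by (simp add: distr_phi)
  also have "\<dots> = measure lborel (phi -` K)" using Kb by (simp add: measure_distr)
  also have "\<dots> = measure lebesgue (psi ` K)" using Pb by (simp add: phi_psi_vimage measure_completion)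
  finally show ?thesis .
qed

lemma area_triangle:
  fixes A B C :: "real \<times> real"
  shows "measure lebesgue (convex hull {A, B, C}) = \<bar>det2 (B - A) (C - A)\<bar> / 2"
proof -
  have "compact (convex hull {A, B, C})" by (simp add: finite_imp_compact_convex_hull)
  then have "measure lebesgue (convex hull {A, B, C}) = measure lebesgue (psi ` (convex hull {A, B, C}))"
    by (rule measure_compact_transfer)
  also have "psi ` (convex hull {A, B, C}) = convex hull {psi A, psi B, psi C}"
    by (simp add: convex_hull_linear_image psi_linear)
  also have "measure lebesgue (convex hull {psi A, psi B, psi C}) = measure lborel (convex hull {psi A, psi B, psi C})"
    by (simp add: finite_imp_compact_convex_hull measure_completion borel_compact)
  also have "\<dots> = \<bar>det2 (B - A) (C - A)\<bar> / 2"
    unfolding content_triangle by (simp add: psi_def det2_def abs_minus_commute algebra_simps)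
  finally show ?thesis .
qed




lemma det2_add_left: "det2 (x + y) z = det2 x z + det2 y z" by (simp add: det2_def algebra_simps)
lemma det2_add_right: "det2 z (x + y) = det2 z x + det2 z y" by (simp add: det2_def algebra_simps)
lemma det2_diff_left: "det2 (x - y) z = det2 x z - det2 y z" by (simp add: det2_def algebra_simps)
lemma det2_diff_right: "det2 z (x - y) = det2 z x - det2 z y" by (simp add: det2_def algebra_simps)
lemma det2_scale_left: "det2 (c *\<^sub>R x) y = c * det2 x y" by (simp add: det2_def algebra_simps)
lemma det2_scale_right: "det2 x (c *\<^sub>R y) = c * det2 x y" by (simp add: det2_def algebra_simps)
lemma det2_neg_left: "det2 (- x) y = - det2 x y" by (simp add: det2_def algebra_simps)
lemma det2_neg_right: "det2 x (- y) = - det2 x y" by (simp add: det2_def algebra_simps)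
lemma det2_self: "det2 x x = 0" by (simp add: det2_def algebra_simps)
lemma det2_zero_left: "det2 0 x = 0" by (simp add: det2_def)
lemma det2_zero_right: "det2 x 0 = 0" by (simp add: det2_def)
lemma det2_swap: "det2 y x = - det2 x y" by (simp add: det2_def algebra_simps)

lemmas det2_lin = det2_add_left det2_add_right det2_diff_left det2_diff_right det2_scale_left
  det2_scale_right det2_neg_left det2_neg_right det2_self det2_zero_left det2_zero_right

lemma det2_affine_comb:
  assumes "u + v = 1"
  shows "det2 d (u *\<^sub>R x + v *\<^sub>R y - a) = u * det2 d (x - a) + v * det2 d (y - a)"
proof -
  have "u *\<^sub>R x + v *\<^sub>R y - a = u *\<^sub>R (x - a) + v *\<^sub>R (y - a)"
    using assms by (simp add: algebra_simps flip: scaleR_add_left)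
  then show ?thesis by (simp add: det2_lin)
qed

lemma convex_det2_le: "convex {w. det2 d (w - a) \<le> 0}"
  unfolding convex_def using det2_affine_comb
  by (smt (verit, ccfv_SIG) mem_Collect_eq mult_nonneg_nonpos)

lemma convex_det2_ge: "convex {w. 0 \<le> det2 d (w - a)}"
  unfolding convex_def using det2_affine_comb
  by (smt (verit, ccfv_SIG) mem_Collect_eq mult_nonneg_nonneg)

lemma convex_det2_eq: "convex {w. det2 d (w - a) = 0}"
  unfolding convex_def using det2_affine_comb by simp

lemma negligible_det2_line:
  assumes "d \<noteq> 0"
  shows "negligible {w. det2 d (w - a) = 0}"
proof -
  define nv where "nv = (- snd d, fst d)"
  have "nv \<noteq> 0" using assms by (auto simp: nv_def prod_eq_iff)
  moreover have "{w. det2 d (w - a) = 0} = {w. nv \<bullet> w = nv \<bullet> a}"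
    by (auto simp: nv_def det2_def inner_prod_def algebra_simps)
  ultimately show ?thesis using negligible_hyperplane by metis
qed

lemma bary_identity:
  fixes a0 p q x :: "real \<times> real"
  shows "det2 (p - a0) (q - a0) *\<^sub>R x = det2 (q - p) (x - p) *\<^sub>R a0 - det2 (q - a0) (x - a0) *\<^sub>R p
            + det2 (p - a0) (x - a0) *\<^sub>R q"
    and "det2 (q - p) (x - p) - det2 (q - a0) (x - a0) + det2 (p - a0) (x - a0) = det2 (p - a0) (q - a0)"
  by (auto simp: det2_def prod_eq_iff algebra_simps)

lemma bary_tri:
  fixes a0 p q x :: "real \<times> real"
  assumes G: "det2 (p - a0) (q - a0) > 0" and "det2 (p - a0) (x - a0) \<ge> 0"
    and "det2 (q - a0) (x - a0) \<le> 0" and "det2 (q - p) (x - p) \<ge> 0"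
  shows "x \<in> convex hull {a0, p, q}"
proof -
  define G where "G = det2 (p - a0) (q - a0)"
  define u where "u = det2 (q - p) (x - p) / G"
  define v where "v = - det2 (q - a0) (x - a0) / G"
  define w where "w = det2 (p - a0) (x - a0) / G"
  have Gp: "G > 0" using G by (simp add: G_def)
  have "x = u *\<^sub>R a0 + v *\<^sub>R p + w *\<^sub>R q"
  proof -
    have "G *\<^sub>R x = G *\<^sub>R (u *\<^sub>R a0 + v *\<^sub>R p + w *\<^sub>R q)"
      using bary_identity(1)[of p a0 q x] Gp by (simp add: u_def v_def w_def G_def algebra_simps)
    then show ?thesis using Gp by simp
  qed
  moreover have "u + v + w = 1"
    using bary_identity(2)[of q p x a0] Gp by (simp add: u_def v_def w_def G_def field_simps)
  moreover have "u \<ge> 0" "v \<ge> 0" "w \<ge> 0" using assms Gp by (simp_all add: u_def v_def w_def G_def divide_simps)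
  ultimately show ?thesis unfolding convex_hull_3 by blast
qed

lemma bary_seg:
  fixes a0 p q x :: "real \<times> real"
  assumes G: "det2 (p - a0) (q - a0) > 0" and "det2 (p - a0) (x - a0) = 0"
    and "det2 (q - a0) (x - a0) \<le> 0" and "det2 (q - p) (x - p) \<ge> 0"
    and "convex A" "a0 \<in> A" "p \<in> A"
  shows "x \<in> A"
proof -
  define G where "G = det2 (p - a0) (q - a0)"
  define u where "u = det2 (q - p) (x - p) / G"
  define v where "v = - det2 (q - a0) (x - a0) / G"
  have Gp: "G > 0" using G by (simp add: G_def)
  have "x = u *\<^sub>R a0 + v *\<^sub>R p"
  proof -
    have "G *\<^sub>R x = G *\<^sub>R (u *\<^sub>R a0 + v *\<^sub>R p)"
      using bary_identity(1)[of p a0 q x] Gp assms(2) by (simp add: u_def v_def G_def algebra_simps)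
    then show ?thesis using Gp by simp
  qed
  moreover have "u + v = 1"
    using bary_identity(2)[of q p x a0] Gp assms(2) by (simp add: u_def v_def G_def field_simps)
  moreover have "u \<ge> 0" "v \<ge> 0" using assms Gp by (simp_all add: u_def v_def G_def divide_simps)
  ultimately show ?thesis using assms(5-7) unfolding convex_def by blast
qed




lemma fan_step:
  fixes S :: "(real \<times> real) set" and a0 p q :: "real \<times> real"
  assumes fin: "finite S" and a0S: "a0 \<in> S" and pS: "p \<in> S"
    and hg: "\<forall>w\<in>S. det2 (p - a0) (w - a0) \<le> 0"
    and hq: "0 \<le> det2 (p - a0) (q - a0)"
    and h1: "\<forall>w\<in>S. det2 (q - a0) (w - a0) \<le> 0"
    and h2: "\<forall>w\<in>S. 0 \<le> det2 (q - p) (w - p)"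
  shows "measure lebesgue (convex hull (insert q S)) = measure lebesgue (convex hull S) + det2 (p - a0) (q - a0) / 2"
proof -
  define G where "G = det2 (p - a0) (q - a0)"
  define A where "A = convex hull S"
  define C where "C = convex hull (insert q S)"
  define T where "T = convex hull {a0, p, q}"
  have cA: "convex A" "convex C" by (simp_all add: A_def C_def convex_convex_hull)
  have a0A: "a0 \<in> A" and pA: "p \<in> A" using a0S pS by (auto simp: A_def hull_inc)
  have AC: "A \<subseteq> C" by (simp add: A_def C_def hull_mono subset_insertI)
  have qC: "q \<in> C" by (simp add: C_def hull_inc)
  have Ag: "A \<subseteq> {w. det2 (p - a0) (w - a0) \<le> 0}"
    unfolding A_def by (rule hull_minimal) (use hg convex_det2_le in auto)
  have C1: "C \<subseteq> {w. det2 (q - a0) (w - a0) \<le> 0}"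
    unfolding C_def by (rule hull_minimal) (use h1 convex_det2_le in \<open>auto simp: det2_self\<close>)
  have C2: "C \<subseteq> {w. 0 \<le> det2 (q - p) (w - p)}"
    unfolding C_def by (rule hull_minimal) (use h2 convex_det2_ge in \<open>auto simp: det2_self\<close>)
  have cmpA: "compact A" by (simp add: A_def fin finite_imp_compact_convex_hull)
  have cmpC: "compact C" by (simp add: C_def fin finite_imp_compact_convex_hull)
  show ?thesis
  proof (cases "G > 0")
    case True
    have pa: "p - a0 \<noteq> 0" using True by (auto simp: G_def det2_lin)
    have Tg: "T \<subseteq> {w. 0 \<le> det2 (p - a0) (w - a0)}"
      unfolding T_def by (rule hull_minimal) (auto simp: det2_self det2_zero_right hq convex_det2_ge)
    have TC: "T \<subseteq> C" unfolding T_def C_def using a0S pS by (intro hull_minimal) (auto simp: hull_inc convex_convex_hull)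
    have CAT: "C \<subseteq> A \<union> T"
    proof
      fix x assume xC: "x \<in> C"
      have Sne: "S \<noteq> {}" using a0S by auto
      from xC obtain u v y where uv: "u \<ge> 0" "v \<ge> 0" "u + v = 1" and yA: "y \<in> A" and x: "x = u *\<^sub>R q + v *\<^sub>R y"
        unfolding C_def A_def convex_hull_insert[OF Sne] by blast
      show "x \<in> A \<union> T"
      proof (cases "det2 (p - a0) (x - a0) \<ge> 0")
        case True
        have c1: "det2 (q - a0) (x - a0) \<le> 0" using C1 xC by auto
        have c2: "0 \<le> det2 (q - p) (x - p)" using C2 xC by auto
        have "x \<in> T" unfolding T_def by (rule bary_tri[of p a0 q x]) (use \<open>G > 0\<close> True c1 c2 in \<open>simp_all add: G_def\<close>)
        then show ?thesis by simp
      next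
        case False
        define gy where "gy = det2 (p - a0) (y - a0)"
        have gy: "gy \<le> 0" using Ag yA by (auto simp: gy_def)
        have gx: "det2 (p - a0) (x - a0) = u * G + v * gy"
          unfolding x gy_def G_def by (rule det2_affine_comb) (rule uv(3))
        define r where "r = - gy / (G - gy)"
        have Ggy: "G - gy > 0" using gy \<open>G > 0\<close> by simp
        have r01: "0 \<le> r" "r \<le> 1"
        proof -
          show "0 \<le> r" unfolding r_def by (rule divide_nonneg_pos) (use gy Ggy in auto)
          show "r \<le> 1" unfolding r_def using \<open>G > 0\<close> by (simp only: divide_le_eq_1_pos[OF Ggy])
        qed
        define z where "z = (1 - r) *\<^sub>R y + r *\<^sub>R q"
        have zC: "z \<in> C" unfolding z_def
          by (rule convexD[OF cA(2)]) (use AC yA qC r01 in auto)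
        have gz: "det2 (p - a0) (z - a0) = 0"
        proof -
          have "det2 (p - a0) (z - a0) = (1 - r) * gy + r * G"
            unfolding z_def gy_def G_def by (rule det2_affine_comb) simp
          also have "\<dots> = 0" using Ggy by (simp add: r_def field_simps)
          finally show ?thesis .
        qed
        have z1: "det2 (q - a0) (z - a0) \<le> 0" using C1 zC by auto
        have z2: "0 \<le> det2 (q - p) (z - p)" using C2 zC by auto
        have zA: "z \<in> A"
          by (rule bary_seg[of p a0 q z A]) (use \<open>G > 0\<close> gz z1 z2 cA(1) a0A pA in \<open>simp_all add: G_def\<close>)
        have ur: "u < r"
        proof -
          have "u * G + v * gy < 0" using False gx by simp
          moreover have "v * gy = gy - u * gy" 
          proof -
            have "v = 1 - u" using uv(3) by simp
            then show ?thesis by (simp add: left_diff_distrib)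
          qed
          ultimately have "u * (G - gy) < - gy" by (simp add: algebra_simps)
          then show ?thesis using Ggy by (simp add: r_def field_simps)
        qed
        have rpos: "r > 0" using ur uv by simp
        have "x = (1 - u / r) *\<^sub>R y + (u / r) *\<^sub>R z"
        proof -
          have "(1 - u / r) *\<^sub>R y + (u / r) *\<^sub>R z = (1 - u / r + (u / r) * (1 - r)) *\<^sub>R y + ((u / r) * r) *\<^sub>R q"
            by (simp add: z_def scaleR_add_right scaleR_add_left add.assoc)
          also have "\<dots> = v *\<^sub>R y + u *\<^sub>R q"
          proof -
            have vu: "v = 1 - u" using uv(3) by simp
            have "1 - u / r + (u / r) * (1 - r) = v" using rpos unfolding vu by (simp add: field_simps)
            moreover have "(u / r) * r = u" using rpos by simp
            ultimately show ?thesis by simp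
          qed
          finally show ?thesis by (simp add: x add.commute)
        qed
        moreover have "0 \<le> u / r" "u / r \<le> 1" using ur rpos uv by (auto simp: divide_simps)
        ultimately have "x \<in> A" using cA(1) yA zA unfolding convex_def
          by (metis diff_add_cancel diff_ge_0_iff_ge)
        then show ?thesis by simp
      qed
    qed
    have CeqAT: "C = A \<union> T" using CAT AC TC by auto
    have negAT: "negligible (A \<inter> T)"
    proof (rule negligible_subset[OF negligible_det2_line[OF pa, of a0]])
      show "A \<inter> T \<subseteq> {w. det2 (p - a0) (w - a0) = 0}"
      proof
        fix x assume "x \<in> A \<inter> T"
        then have "det2 (p - a0) (x - a0) \<le> 0" "0 \<le> det2 (p - a0) (x - a0)" using Ag Tg by auto
        then show "x \<in> {w. det2 (p - a0) (w - a0) = 0}" by simp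
      qed
    qed
    have "measure lebesgue C = measure lebesgue A + measure lebesgue T - measure lebesgue (A \<inter> T)"
      unfolding CeqAT
      by (rule measure_Un3) (auto simp: T_def cmpA lmeasurable_compact finite_imp_compact_convex_hull)
    also have "measure lebesgue (A \<inter> T) = 0" using negAT by (rule negligible_imp_measure0)
    also have "measure lebesgue T = G / 2" using True by (simp add: T_def area_triangle G_def)
    finally show ?thesis by (simp add: C_def A_def G_def)
  next
    case False
    then have G0: "G = 0" using hq by (simp add: G_def)
    show ?thesis
    proof (cases "q \<in> A")
      case True
      then have "C = A" unfolding C_def A_def by (rule hull_redundant)
      then show ?thesis using G0 by (simp add: C_def A_def G_def)
    next
      case qA: False
      obtain d b where dne: "d \<noteq> 0" and CL: "C \<subseteq> {w. det2 d (w - b) = 0}"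
      proof (cases "p = a0")
        case True
        have qa: "q - a0 \<noteq> 0" using qA a0A by auto
        have "C \<subseteq> {w. det2 (q - a0) (w - a0) = 0}"
        proof -
          have "\<forall>w\<in>insert q S. det2 (q - a0) (w - a0) = 0"
            using h1 h2 True by (force simp: det2_self)
          then show ?thesis unfolding C_def by (intro hull_minimal) (auto simp: convex_det2_eq)
        qed
        then show ?thesis using that qa by blast
      next
        case pa0: False
        define d where "d = p - a0"
        have dne: "d \<noteq> 0" using pa0 by (simp add: d_def)
        define mu where "mu = (d \<bullet> (q - a0)) / (d \<bullet> d)"
        have dd: "d \<bullet> d > 0" using dne by simp
        have qmu: "q - a0 = mu *\<^sub>R d"
        proof -
          obtain d1 d2 where dd12: "d = (d1, d2)" by (cases d)
          obtain e1 e2 where ee: "q - a0 = (e1, e2)" by (cases "q - a0")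
          have det0: "d1 * e2 - d2 * e1 = 0" using G0 by (simp add: G_def d_def[symmetric] dd12 ee det2_def)
          have pos: "d1 * d1 + d2 * d2 > 0" using dd by (simp add: dd12 inner_prod_def)
          have "e1 * (d1 * d1 + d2 * d2) - (d1 * e1 + d2 * e2) * d1 = - d2 * (d1 * e2 - d2 * e1)"
            by (simp add: algebra_simps)
          then have "e1 * (d1 * d1 + d2 * d2) = (d1 * e1 + d2 * e2) * d1" using det0 by simp
          moreover have "e2 * (d1 * d1 + d2 * d2) - (d1 * e1 + d2 * e2) * d2 = d1 * (d1 * e2 - d2 * e1)"
            by (simp add: algebra_simps)
          then have "e2 * (d1 * d1 + d2 * d2) = (d1 * e1 + d2 * e2) * d2" using det0 by simp
          ultimately have h12: "e1 * (d1 * d1 + d2 * d2) = (d1 * e1 + d2 * e2) * d1"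
              "e2 * (d1 * d1 + d2 * d2) = (d1 * e1 + d2 * e2) * d2" by auto
          have m: "mu = (d1*e1+d2*e2)/(d1*d1+d2*d2)" by (simp add: mu_def dd12 ee inner_prod_def)
          have x1: "e1 = mu * d1"
          proof -
            have "e1 = ((d1*e1+d2*e2)*d1)/(d1*d1+d2*d2)" using h12(1) pos by (auto simp: eq_divide_eq)
            then show ?thesis by (simp add: m)
          qed
          have x2: "e2 = mu * d2"
          proof -
            have "e2 = ((d1*e1+d2*e2)*d2)/(d1*d1+d2*d2)" using h12(2) pos by (auto simp: eq_divide_eq)
            then show ?thesis by (simp add: m)
          qed
          show ?thesis by (simp add: ee dd12 x1 x2)
        qed
        have g1mu: "det2 (q - a0) (w - a0) = mu * det2 d (w - a0)" for w
          by (simp add: qmu det2_scale_left)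
        have g2mu: "det2 (q - p) (w - p) = (mu - 1) * det2 d (w - a0)" for w
        proof -
          have "q - p = (mu - 1) *\<^sub>R d" using qmu by (simp add: d_def algebra_simps)
          moreover have "w - p = (w - a0) - d" by (simp add: d_def)
          moreover have "det2 ((mu - 1) *\<^sub>R d) ((w - a0) - d) = (mu - 1) * det2 d (w - a0)"
            by (simp add: det2_def algebra_simps)
          ultimately show ?thesis by metis
        qed
        have "mu < 0 \<or> mu > 1"
        proof (rule ccontr)
          assume "\<not> (mu < 0 \<or> mu > 1)"
          then have m: "0 \<le> mu" "mu \<le> 1" by auto
          have "q = (1 - mu) *\<^sub>R a0 + mu *\<^sub>R p"
            using qmu by (simp add: d_def algebra_simps)
          then have "q \<in> A" using cA(1) a0A pA m unfolding convex_def
            by (metis diff_add_cancel diff_ge_0_iff_ge)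
          then show False using qA by simp
        qed
        then have Sz: "\<forall>w\<in>S. det2 d (w - a0) = 0"
        proof
          assume "mu < 0"
          then show ?thesis using h1 hg g1mu d_def
            by (smt (verit, best) mult_neg_neg)
        next
          assume "mu > 1"
          then show ?thesis using h2 hg g2mu d_def
            by (smt (verit, best) mult_pos_neg)
        qed
        have "C \<subseteq> {w. det2 d (w - a0) = 0}"
        proof -
          have "\<forall>w\<in>insert q S. det2 d (w - a0) = 0"
            using Sz G0 by (auto simp: G_def d_def)
          then show ?thesis unfolding C_def by (intro hull_minimal) (auto simp: convex_det2_eq)
        qed
        then show ?thesis using that dne by blast
      qed
      have negC: "negligible C" by (rule negligible_subset[OF negligible_det2_line[OF dne] CL])
      have negA: "negligible A" using negC AC negligible_subset by blast
      show ?thesis using negligible_imp_measure0[OF negC] negligible_imp_measure0[OF negA] G0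
        by (simp add: C_def A_def G_def)
    qed
  qed
qed




lemma plucker: "det2 x y * det2 z w = det2 x z * det2 y w - det2 x w * det2 y z"
  unfolding det2_def by (simp add: algebra_simps)

lemma mod_ne_shift:
  fixes k d N :: nat
  assumes "0 < d" "d < N"
  shows "(k + d) mod N \<noteq> k mod N"
proof
  assume "(k + d) mod N = k mod N"
  then have "N dvd (k + d - k)" using mod_eq_dvd_iff_nat[of k "k + d" N] by simp
  then have "N dvd d" by simp
  then show False using assms by (simp add: nat_dvd_not_less)
qed

lemma det2_sum_left: "det2 (sum f A) y = (\<Sum>a\<in>A. det2 (f a) y)"
  by (induction A rule: infinite_finite_induct) (simp_all add: det2_lin)

lemma det2_sum_right: "det2 y (sum f A) = (\<Sum>a\<in>A. det2 y (f a))"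
  by (induction A rule: infinite_finite_induct) (simp_all add: det2_lin)

context
  fixes n :: nat and U :: "nat \<Rightarrow> real \<times> real"
  assumes n2: "n \<ge> 2"
    and Uper: "\<forall>k. U (k + 2 * n) = U k"
    and UC: "\<forall>k j. j mod (2 * n) \<noteq> k mod (2 * n) \<and> j mod (2 * n) \<noteq> (k + 1) mod (2 * n)
                         \<longrightarrow> det2 (U (k + 1) - U k) (U j - U k) > 0"
    and Usym: "\<forall>k. U (k + n) = - U k"
begin

lemma UCd:
  assumes "2 \<le> d" "d < 2 * n"
  shows "det2 (U (k + 1) - U k) (U (k + d) - U k) > 0"
proof -
  have "(k + d) mod (2 * n) \<noteq> k mod (2 * n)" using assms by (intro mod_ne_shift) auto
  moreover have "(k + d) mod (2 * n) \<noteq> (k + 1) mod (2 * n)"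
    using mod_ne_shift[of "d - 1" "2 * n" "k + 1"] assms by simp
  ultimately show ?thesis using UC by blast
qed

lemma Lray:
  assumes "p < x" "x + 1 < p + 2 * n"
  shows "det2 (U x - U p) (U (x + 1) - U p) > 0"
proof -
  have "det2 (U (x + 1) - U x) (U (x + (p + 2 * n - x)) - U x) > 0"
    using assms by (intro UCd) auto
  moreover have "U (x + (p + 2 * n - x)) = U p" using assms Uper by simp
  moreover have "det2 (U x - U p) (U (x + 1) - U p) = det2 (U (x + 1) - U x) (U p - U x)"
    by (simp add: det2_def algebra_simps)
  ultimately show ?thesis by simp
qed

lemma Ltri:
  assumes "p < q" "q < r" "r < p + 2 * n"
  shows "det2 (U q - U p) (U r - U p) > 0"
  using assms
proof (induction r)
  case 0
  then show ?case by simp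
next
  case (Suc r)
  show ?case
  proof (cases "q = r")
    case True
    then show ?thesis using Lray[of p q] Suc.prems by simp
  next
    case False
    then have qr: "q < r" using Suc.prems by simp
    define h where "h = U (p + 1) - U p"
    define vq where "vq = U q - U p"
    define vr where "vr = U r - U p"
    define vr1 where "vr1 = U (Suc r) - U p"
    have IH: "det2 vq vr > 0" using Suc.IH qr Suc.prems by (simp add: vq_def vr_def)
    have hr: "det2 h vr > 0"
      using UCd[of "r - p" p] qr Suc.prems by (simp add: h_def vr_def)
    have hr1: "det2 h vr1 > 0"
      using UCd[of "Suc r - p" p] qr Suc.prems by (simp add: h_def vr1_def)
    have hq: "det2 h vq \<ge> 0"
    proof (cases "q = p + 1")
      case True
      then show ?thesis by (simp add: h_def vq_def det2_self)
    next
      case False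
      then show ?thesis using UCd[of "q - p" p] Suc.prems
        by (simp add: h_def vq_def less_imp_le)
    qed
    have rr1: "det2 vr vr1 > 0" using Lray[of p r] qr Suc.prems by (simp add: vr_def vr1_def)
    have "det2 h vr * det2 vq vr1 = det2 h vq * det2 vr vr1 + det2 h vr1 * det2 vq vr"
      using plucker[of h vr vq vr1] det2_swap[of vr vq] by simp
    also have "\<dots> > 0" using hq rr1 hr1 IH
      by (simp add: add_nonneg_pos)
    finally have "det2 vq vr1 > 0" using hr zero_less_mult_pos by blast
    then show ?thesis by (simp add: vq_def vr1_def)
  qed
qed

lemma Ledge:
  assumes "a < b" "b < a + n"
  shows "det2 (U (a + 1) - U a) (U (b + 1) - U b) > 0"
proof -
  define ea where "ea = U (a + 1) - U a"
  define eb where "eb = U (b + 1) - U b"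
  define w1 where "w1 = U (a + n) - U b"
  define w2 where "w2 = U a - U b"
  have A1: "det2 ea w1 > 0"
  proof -
    have "w1 = U (a + (b + n - a)) - U a"
      using assms Usym by (simp add: w1_def)
    moreover have "det2 ea (U (a + (b + n - a)) - U a) > 0"
      unfolding ea_def using assms n2 by (intro UCd) auto
    ultimately show ?thesis by simp
  qed
  have A2: "det2 ea w2 \<le> 0"
  proof (cases "b = a + 1")
    case True
    then show ?thesis by (simp add: ea_def w2_def det2_def algebra_simps)
  next
    case False
    have "det2 ea (U (a + (b - a)) - U a) > 0"
      unfolding ea_def using assms False by (intro UCd) auto
    moreover have "det2 ea w2 = - det2 ea (U (a + (b - a)) - U a)"
      using assms by (simp add: w2_def det2_def algebra_simps)
    ultimately show ?thesis by simp
  qed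
  have A3: "det2 eb w2 > 0"
  proof -
    have "det2 eb (U (b + (a + 2 * n - b)) - U b) > 0"
      unfolding eb_def using assms n2 by (intro UCd) auto
    moreover have "U (b + (a + 2 * n - b)) = U a" using assms Uper by simp
    ultimately show ?thesis by (simp add: w2_def)
  qed
  have A4: "det2 eb w1 \<ge> 0"
  proof (cases "a + n = b + 1")
    case True
    then show ?thesis by (simp add: eb_def w1_def det2_self)
  next
    case False
    have "det2 eb (U (b + (a + n - b)) - U b) > 0"
      unfolding eb_def using assms False by (intro UCd) auto
    moreover have "b + (a + n - b) = a + n" using assms by simp
    ultimately show ?thesis by (simp add: w1_def)
  qed
  have A5: "det2 w1 w2 > 0"
  proof -
    have "det2 (U (a + n) - U b) (U (a + 2 * n) - U b) > 0"
      using assms n2 by (intro Ltri) auto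
    moreover have "U (a + 2 * n) = U a" using Uper by simp
    ultimately show ?thesis by (simp add: w1_def w2_def)
  qed
  have "det2 ea eb * det2 w1 w2 = det2 ea w1 * det2 eb w2 - det2 ea w2 * det2 eb w1"
    by (rule plucker)
  also have "\<dots> > 0"
  proof -
    have "det2 ea w1 * det2 eb w2 > 0" using A1 A3 by simp
    moreover have "det2 ea w2 * det2 eb w1 \<le> 0" using A2 A4 by (simp add: mult_nonpos_nonneg)
    ultimately show ?thesis by simp
  qed
  finally have "det2 ea eb > 0" using A5 zero_less_mult_pos2 by blast
  then show ?thesis by (simp add: ea_def eb_def)
qed

end


context
  fixes n :: nat and U P :: "nat \<Rightarrow> real \<times> real" and t :: "nat \<Rightarrow> real"
  assumes n2: "n \<ge> 2"
    and Uper: "\<forall>k. U (k + 2 * n) = U k"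
    and UC: "\<forall>k j. j mod (2 * n) \<noteq> k mod (2 * n) \<and> j mod (2 * n) \<noteq> (k + 1) mod (2 * n)
                         \<longrightarrow> det2 (U (k + 1) - U k) (U j - U k) > 0"
    and Usym: "\<forall>k. U (k + n) = - U k"
    and Pt: "\<forall>k. P (k + 1) - P k = t k *\<^sub>R (U (k + 1) - U k)"
    and tpos: "\<forall>k. t k \<ge> 0"
begin

lemma Ptel: "P (j + m) - P j = (\<Sum>a\<in>{j..<j + m}. t a *\<^sub>R (U (a + 1) - U a))"
proof (induction m)
  case 0
  then show ?case by simp
next
  case (Suc m)
  have "P (j + Suc m) - P j = (P (j + m + 1) - P (j + m)) + (P (j + m) - P j)" by simp
  also have "\<dots> = t (j + m) *\<^sub>R (U (j + m + 1) - U (j + m)) + (\<Sum>a\<in>{j..<j + m}. t a *\<^sub>R (U (a + 1) - U a))"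
    using Pt Suc.IH by simp
  finally show ?case by (simp add: add.commute)
qed

lemma orient:
  assumes "j < l" "l < r" "r \<le> j + n"
  shows "0 \<le> det2 (P l - P j) (P r - P j)"
proof -
  define e where "e a = U (a + 1) - U a" for a
  have X: "P l - P j = (\<Sum>a\<in>{j..<l}. t a *\<^sub>R e a)"
    using Ptel[of j "l - j"] assms by (simp add: e_def)
  have Y: "P r - P l = (\<Sum>b\<in>{l..<r}. t b *\<^sub>R e b)"
    using Ptel[of l "r - l"] assms by (simp add: e_def)
  have "det2 (P l - P j) (P r - P j) = det2 (P l - P j) (P r - P l)"
  proof -
    have "P r - P j = (P l - P j) + (P r - P l)" by simp
    then show ?thesis by (simp only: det2_add_right det2_self)
  qed
  also have "\<dots> = (\<Sum>b\<in>{l..<r}. \<Sum>a\<in>{j..<l}. t b * (t a * det2 (e a) (e b)))"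
    unfolding X Y det2_sum_left det2_sum_right by (simp add: det2_scale_left det2_scale_right mult.assoc)
  also have "\<dots> \<ge> 0"
  proof (intro sum_nonneg)
    fix a b assume b: "b \<in> {l..<r}" and a: "a \<in> {j..<l}"
    have "det2 (e a) (e b) > 0" unfolding e_def
      using a b assms by (intro Ledge[OF n2 Uper UC Usym]) auto
    then show "0 \<le> t b * (t a * det2 (e a) (e b))" using tpos by simp
  qed
  finally show ?thesis .
qed

lemma fan:
  assumes "m \<le> n"
  shows "measure lebesgue (convex hull (P ` {s..s + m}))
     = (\<Sum>k\<in>{1..<m}. det2 (P (s + k) - P s) (P (s + k + 1) - P s)) / 2"
  using assms
proof (induction m)
  case 0
  have "measure lebesgue (convex hull (P ` {s..s + 0})) = 0"
    by (simp add: negligible_imp_measure0)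
  then show ?case by simp
next
  case (Suc m)
  have mn: "m < n" using Suc.prems by simp
  define S where "S = P ` {s..s + m}"
  have eq: "P ` {s..s + Suc m} = insert (P (s + m + 1)) S"
    unfolding S_def by (simp add: atLeastAtMostSuc_conv)
  have hg: "\<forall>w\<in>S. det2 (P (s + m) - P s) (w - P s) \<le> 0"
  proof
    fix w assume "w \<in> S"
    then obtain k where k: "s \<le> k" "k \<le> s + m" and w: "w = P k" by (auto simp: S_def)
    show "det2 (P (s + m) - P s) (w - P s) \<le> 0"
    proof (cases "k = s \<or> k = s + m")
      case True
      then show ?thesis by (auto simp: w det2_self det2_zero_right)
    next
      case False
      then have "0 \<le> det2 (P k - P s) (P (s + m) - P s)" using k mn by (intro orient) auto
      then show ?thesis by (simp add: w det2_swap[of "P (s + m) - P s"])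
    qed
  qed
  have hq: "0 \<le> det2 (P (s + m) - P s) (P (s + m + 1) - P s)"
  proof (cases "m = 0")
    case True
    then show ?thesis by (simp add: det2_zero_left)
  next
    case False
    then show ?thesis using mn by (intro orient) auto
  qed
  have h1: "\<forall>w\<in>S. det2 (P (s + m + 1) - P s) (w - P s) \<le> 0"
  proof
    fix w assume "w \<in> S"
    then obtain k where k: "s \<le> k" "k \<le> s + m" and w: "w = P k" by (auto simp: S_def)
    show "det2 (P (s + m + 1) - P s) (w - P s) \<le> 0"
    proof (cases "k = s")
      case True
      then show ?thesis by (auto simp: w det2_zero_right)
    next
      case False
      then have "0 \<le> det2 (P k - P s) (P (s + m + 1) - P s)" using k mn by (intro orient) auto
      then show ?thesis by (simp add: w det2_swap[of "P k - P s"])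
    qed
  qed
  have h2: "\<forall>w\<in>S. 0 \<le> det2 (P (s + m + 1) - P (s + m)) (w - P (s + m))"
  proof
    fix w assume "w \<in> S"
    then obtain k where k: "s \<le> k" "k \<le> s + m" and w: "w = P k" by (auto simp: S_def)
    show "0 \<le> det2 (P (s + m + 1) - P (s + m)) (w - P (s + m))"
    proof (cases "k = s + m")
      case True
      then show ?thesis by (auto simp: w det2_zero_right)
    next
      case False
      then have "0 \<le> det2 (P (s + m) - P k) (P (s + m + 1) - P k)" using k mn by (intro orient) auto
      moreover have "det2 (P (s + m + 1) - P (s + m)) (P k - P (s + m)) = det2 (P (s + m) - P k) (P (s + m + 1) - P k)"
        by (simp add: det2_def algebra_simps)
      ultimately show ?thesis by (simp add: w)
    qed
  qed
  have fin: "finite S" by (simp add: S_def)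
  have a0S: "P s \<in> S" and pS: "P (s + m) \<in> S" by (auto simp: S_def)
  have "measure lebesgue (convex hull (P ` {s..s + Suc m}))
      = measure lebesgue (convex hull S) + det2 (P (s + m) - P s) (P (s + m + 1) - P s) / 2"
    unfolding eq by (rule fan_step[OF fin a0S pS hg hq h1 h2])
  also have "measure lebesgue (convex hull S) = (\<Sum>k\<in>{1..<m}. det2 (P (s + k) - P s) (P (s + k + 1) - P s)) / 2"
    unfolding S_def using Suc.IH mn by simp
  also have "(\<Sum>k\<in>{1..<m}. det2 (P (s + k) - P s) (P (s + k + 1) - P s)) / 2 + det2 (P (s + m) - P s) (P (s + m + 1) - P s) / 2
      = (\<Sum>k\<in>{1..<Suc m}. det2 (P (s + k) - P s) (P (s + k + 1) - P s)) / 2"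
  proof (cases "m = 0")
    case True
    then show ?thesis by (simp add: det2_zero_left)
  next
    case False
    then show ?thesis by (simp add: sum.atLeastLessThan_Suc add_divide_distrib)
  qed
  finally show ?case .
qed

end




lemma final_alg:
  fixes P M U :: "nat \<Rightarrow> real \<times> real" and alpha :: "nat \<Rightarrow> real" and c :: real and n i :: nat
  assumes n1: "n \<ge> 1"
    and PM: "\<forall>k. P k = M k + c *\<^sub>R U k"
    and PMn: "\<forall>k. P (k + n) = M k - c *\<^sub>R U k"
    and Mn: "M (i + n) = M i"
    and al: "\<forall>k. M (k + 1) - M k = alpha k *\<^sub>R (U (k + 1) - U k)"
  shows "(\<Sum>k\<in>{1..<n}. det2 (P (i + k) - P i) (P (i + k + 1) - P i)) / 2
       - (\<Sum>k\<in>{1..<n}. det2 (P (i + n + k) - P (i + n)) (P (i + n + k + 1) - P (i + n))) / 2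
       = 2 * c * (\<Sum>k\<in>{0..<n}. alpha (i + k) * det2 (U (i + k)) (U (i + k + 1)))"
proof -
  define X where "X k = M (i + k) - M i" for k
  define Y where "Y k = U (i + k)" for k
  define E where "E k = det2 (Y k) (X (k + 1)) + det2 (X k) (Y (k + 1))" for k
  define W where "W k = det2 (X k) (Y 0)" for k
  define Z where "Z k = det2 (X k) (Y k)" for k
  have t1: "det2 (P (i + k) - P i) (P (i + k + 1) - P i) - det2 (P (i + n + k) - P (i + n)) (P (i + n + k + 1) - P (i + n))
      = 2 * c * (E k + W (k + 1) - W k)" for k
  proof -
    have a: "P (i + k) - P i = X k + c *\<^sub>R (Y k - Y 0)" using PM by (simp add: X_def Y_def algebra_simps)
    have b: "P (i + k + 1) - P i = X (k + 1) + c *\<^sub>R (Y (k + 1) - Y 0)" using PM by (simp add: X_def Y_def algebra_simps)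
    have c1: "P (i + n + k) - P (i + n) = X k - c *\<^sub>R (Y k - Y 0)"
      using PMn[rule_format, of "i + k"] PMn[rule_format, of i] by (simp add: X_def Y_def algebra_simps)
    have d: "P (i + n + k + 1) - P (i + n) = X (k + 1) - c *\<^sub>R (Y (k + 1) - Y 0)"
      using PMn[rule_format, of "i + k + 1"] PMn[rule_format, of i] by (simp add: X_def Y_def algebra_simps)
    show ?thesis unfolding a b c1 d E_def W_def by (simp add: det2_def algebra_simps)
  qed
  have t2: "2 * (alpha (i + k) * det2 (Y k) (Y (k + 1))) = E k + Z k - Z (k + 1)" for k
  proof -
    have xk: "X (k + 1) = X k + alpha (i + k) *\<^sub>R (Y (k + 1) - Y k)"
      using al[rule_format, of "i + k"] by (simp add: X_def Y_def algebra_simps)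
    show ?thesis by (simp only: E_def Z_def xk) (simp add: det2_def algebra_simps)
  qed
  have X0: "X 0 = 0" by (simp add: X_def)
  have Xn: "X n = 0" using Mn by (simp add: X_def)
  have "(\<Sum>k\<in>{1..<n}. det2 (P (i + k) - P i) (P (i + k + 1) - P i)) / 2
       - (\<Sum>k\<in>{1..<n}. det2 (P (i + n + k) - P (i + n)) (P (i + n + k + 1) - P (i + n))) / 2
       = (\<Sum>k\<in>{1..<n}. 2 * c * (E k + W (k + 1) - W k)) / 2"
  proof -
    have s1: "(\<Sum>k\<in>{1..<n}. det2 (P (i + k) - P i) (P (i + k + 1) - P i))
       - (\<Sum>k\<in>{1..<n}. det2 (P (i + n + k) - P (i + n)) (P (i + n + k + 1) - P (i + n)))
       = (\<Sum>k\<in>{1..<n}. 2 * c * (E k + W (k + 1) - W k))"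
      by (simp only: sum_subtractf[symmetric] t1)
    show ?thesis by (simp only: diff_divide_distrib[symmetric] s1)
  qed
  also have "\<dots> = c * ((\<Sum>k\<in>{1..<n}. E k) + (\<Sum>k\<in>{1..<n}. W (Suc k) - W k))"
  proof -
    have "(\<Sum>k\<in>{1..<n}. 2 * c * (E k + W (k + 1) - W k)) = (2 * c) * (\<Sum>k\<in>{1..<n}. E k + (W (Suc k) - W k))"
      by (simp add: sum_distrib_left add_diff_eq)
    also have "\<dots> = (2 * c) * ((\<Sum>k\<in>{1..<n}. E k) + (\<Sum>k\<in>{1..<n}. W (Suc k) - W k))"
      by (simp only: sum.distrib)
    finally show ?thesis by simp
  qed
  also have "(\<Sum>k\<in>{1..<n}. W (Suc k) - W k) = W n - W 1"
    using n1 by (rule sum_Suc_diff')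
  finally have L: "(\<Sum>k\<in>{1..<n}. det2 (P (i + k) - P i) (P (i + k + 1) - P i)) / 2
       - (\<Sum>k\<in>{1..<n}. det2 (P (i + n + k) - P (i + n)) (P (i + n + k + 1) - P (i + n))) / 2
       = c * ((\<Sum>k\<in>{1..<n}. E k) + W n - W 1)" by simp
  have "2 * c * (\<Sum>k\<in>{0..<n}. alpha (i + k) * det2 (U (i + k)) (U (i + k + 1)))
      = c * (\<Sum>k\<in>{0..<n}. 2 * (alpha (i + k) * det2 (Y k) (Y (k + 1))))"
    by (simp add: Y_def sum_distrib_left algebra_simps)
  also have "\<dots> = c * (\<Sum>k\<in>{0..<n}. E k - (Z (Suc k) - Z k))"
  proof -
    have "\<And>k. 2 * (alpha (i + k) * det2 (Y k) (Y (k + 1))) = E k - (Z (Suc k) - Z k)"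
      using t2 by simp
    then show ?thesis by (simp only:)
  qed
  also have "\<dots> = c * ((\<Sum>k\<in>{0..<n}. E k) - (Z n - Z 0))"
  proof -
    have "(\<Sum>k\<in>{0..<n}. Z (Suc k) - Z k) = Z n - Z 0" by (rule sum_Suc_diff') simp
    then show ?thesis by (simp only: sum_subtractf)
  qed
  also have "(\<Sum>k\<in>{0..<n}. E k) = E 0 + (\<Sum>k\<in>{1..<n}. E k)"
    using n1 by (simp add: sum.atLeast_Suc_lessThan)
  finally have R: "2 * c * (\<Sum>k\<in>{0..<n}. alpha (i + k) * det2 (U (i + k)) (U (i + k + 1)))
      = c * (E 0 + (\<Sum>k\<in>{1..<n}. E k) - (Z n - Z 0))" by simp
  have e0: "E 0 = - W 1" by (simp add: E_def W_def X0 det2_lin det2_swap[of "Y 0"])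
  have z: "Z n = 0" "Z 0 = 0" "W n = 0" by (simp_all add: Z_def W_def X0 Xn det2_lin)
  show ?thesis unfolding L R e0 z by (simp add: algebra_simps)
qed

theorem proposition3p4:
  fixes n :: nat and U P M :: "nat \<Rightarrow> real \<times> real" and c :: real
    and alpha beta :: "nat \<Rightarrow> real" and i :: nat
  assumes n2: "n \<ge> 2"
    and U_per: "\<forall>k. U (k + 2 * n) = U k"
    and U_convex_ccw: "\<forall>k j. j mod (2 * n) \<noteq> k mod (2 * n) \<and> j mod (2 * n) \<noteq> (k + 1) mod (2 * n)
                         \<longrightarrow> det2 (U (k + 1) - U k) (U j - U k) > 0"
    and U_sym: "\<forall>k. U (k + n) = - U k"
    and c_pos: "c > 0"
    and P_per: "\<forall>k. P (k + 2 * n) = P k"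
    and P_convex_ccw: "\<forall>k j. det2 (P (k + 1) - P k) (P j - P k) \<ge> 0"
    and P_interior: "interior (convex hull (range P)) \<noteq> {}"
    and P_edges: "\<forall>k. \<exists>t\<ge>0. P (k + 1) - P k = t *\<^sub>R (U (k + 1) - U k)"
    and P_diam: "\<forall>k. P k - P (k + n) = (2 * c) *\<^sub>R U k"
    and M_def: "\<forall>k. M k = (1 / 2) *\<^sub>R (P k + P (k + n))"
    and alpha_def: "\<forall>k. M (k + 1) - M k = alpha k *\<^sub>R (U (k + 1) - U k)"
    and beta_def: "\<forall>k. beta k = 1 / 2 * (\<Sum>j = k..k + n - 1. alpha j * det2 (U j) (U (j + 1)))"
    and i_range: "i \<in> {1..2 * n}"
  shows "measure lebesgue (convex hull (P ` {i..i + n}))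
         - measure lebesgue (convex hull (P ` {i + n..i + 2 * n})) = 4 * c * beta i"
proof -
  have "\<exists>t. \<forall>k. 0 \<le> t k \<and> P (k + 1) - P k = t k *\<^sub>R (U (k + 1) - U k)"
    using P_edges by (intro choice) blast
  then obtain t where tP: "\<forall>k. 0 \<le> t k \<and> P (k + 1) - P k = t k *\<^sub>R (U (k + 1) - U k)" by blast
  have Pt: "\<forall>k. P (k + 1) - P k = t k *\<^sub>R (U (k + 1) - U k)" using tP by blast
  have tpos: "\<forall>k. t k \<ge> 0" using tP by blast
  have n1: "n \<ge> 1" using n2 by simp
  have PM: "\<forall>k. P k = M k + c *\<^sub>R U k"
  proof
    fix k
    have d: "P k - P (k + n) = (2 * c) *\<^sub>R U k" using P_diam by blast
    have d1: "fst (P k) - fst (P (k + n)) = 2 * c * fst (U k)" using arg_cong[OF d, of fst] by simp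
    have d2: "snd (P k) - snd (P (k + n)) = 2 * c * snd (U k)" using arg_cong[OF d, of snd] by simp
    have m: "M k = (1 / 2) *\<^sub>R (P k + P (k + n))" using M_def by blast
    show "P k = M k + c *\<^sub>R U k" unfolding m prod_eq_iff by (intro conjI; insert d1 d2; simp add: field_simps; linarith)
  qed
  have PMn: "\<forall>k. P (k + n) = M k - c *\<^sub>R U k"
  proof
    fix k
    have d: "P k - P (k + n) = (2 * c) *\<^sub>R U k" using P_diam by blast
    have d1: "fst (P k) - fst (P (k + n)) = 2 * c * fst (U k)" using arg_cong[OF d, of fst] by simp
    have d2: "snd (P k) - snd (P (k + n)) = 2 * c * snd (U k)" using arg_cong[OF d, of snd] by simp
    have m: "M k = (1 / 2) *\<^sub>R (P k + P (k + n))" using M_def by blast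
    show "P (k + n) = M k - c *\<^sub>R U k" unfolding m prod_eq_iff by (intro conjI; insert d1 d2; simp add: field_simps; linarith)
  qed
  have Mn: "M (i + n) = M i"
  proof -
    have "P (i + n + n) = P i" using P_per[rule_format, of i] by (simp add: mult_2 add.assoc)
    then show ?thesis using M_def by (simp add: add.commute)
  qed
  have al: "\<forall>k. M (k + 1) - M k = alpha k *\<^sub>R (U (k + 1) - U k)" using alpha_def by blast
  have A1: "measure lebesgue (convex hull (P ` {i..i + n}))
      = (\<Sum>k\<in>{1..<n}. det2 (P (i + k) - P i) (P (i + k + 1) - P i)) / 2"
    using fan[OF n2 U_per U_convex_ccw U_sym Pt tpos, of n i] by simp
  have A2: "measure lebesgue (convex hull (P ` {i + n..i + 2 * n}))
      = (\<Sum>k\<in>{1..<n}. det2 (P (i + n + k) - P (i + n)) (P (i + n + k + 1) - P (i + n))) / 2"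
  proof -
    have eq: "i + 2 * n = i + n + n" by simp
    show ?thesis unfolding eq using fan[OF n2 U_per U_convex_ccw U_sym Pt tpos, of n "i + n"] by simp
  qed
  have B: "(\<Sum>j = i..i + n - 1. alpha j * det2 (U j) (U (j + 1)))
      = (\<Sum>k\<in>{0..<n}. alpha (i + k) * det2 (U (i + k)) (U (i + k + 1)))"
    by (rule sum.reindex_bij_witness[of _ "\<lambda>k. i + k" "\<lambda>j. j - i"]) (use n1 in auto)
  have "4 * c * beta i = 2 * c * (\<Sum>k\<in>{0..<n}. alpha (i + k) * det2 (U (i + k)) (U (i + k + 1)))"
  proof -
    have "beta i = 1 / 2 * (\<Sum>j = i..i + n - 1. alpha j * det2 (U j) (U (j + 1)))"
      using beta_def by blast
    then show ?thesis unfolding B by simp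
  qed
  note H = this
  show ?thesis by (simp only: A1 A2 final_alg[OF n1 PM PMn Mn al] H)
qed


end
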